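(* Let $M$ be a nondegenerate $(0,1)$-matrix of order $n$, and let $A$ be the matrix of order $n+1$ obtained from $M$ by adding an $(n+1)$th row $(0,\dots,0,1)$ and an $(n+1)$th column consisting of $1$'s. Write $A^{-1}=(l_{ij})$. Then for each $i=1,\dots,n$, $\sum_{j=1}^{n+1}|l_{ij}|\ge2$. If $|\det M|=h_n$, then $\sum_{j=1}^{n+1}|l_{ij}|=2$ for all $i=1,\dots,n$. Consequently, if $\sum_{j=1}^{n+1}|l_{ij}|>2$ for some $i$, then $|\det M|<h_n$.
   Context: $h_n$ denotes the maximal value of the determinant of an $n\times n$ matrix with all entries in $\{0,1\}$. *)

theory Defs
  imports "Jordan_Normal_Form.Determinant"
begin

definition zero_one_mat :: "nat \<Rightarrow> real mat \<Rightarrow> bool" where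
  "zero_one_mat n M \<longleftrightarrow> M \<in> carrier_mat n n \<and>
     (\<forall>i<n. \<forall>j<n. M $$ (i,j) = 0 \<or> M $$ (i,j) = 1)"

definition h :: "nat \<Rightarrow> real" where
  "h n = Max {det M | M. zero_one_mat n M}"

definition border_mat :: "nat \<Rightarrow> real mat \<Rightarrow> real mat" where
  "border_mat n M = mat (n+1) (n+1)
     (\<lambda>(i,j). if j = n then 1 else if i = n then 0 else M $$ (i,j))"

end

theory Submission
  imports Defs "Jordan_Normal_Form.Gauss_Jordan_Elimination"
begin

lemma zo_finite: "finite {det M | M. zero_one_mat n M}"
proof -
  have "{M. zero_one_mat n M} \<subseteq> (\<lambda>S. mat n n (\<lambda>ij. if ij \<in> S then 1 else 0)) ` Pow ({..<n}\<times>{..<n})"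
  proof
    fix M assume "M \<in> {M. zero_one_mat n M}"
    hence M: "M \<in> carrier_mat n n" "\<forall>i<n. \<forall>j<n. M $$ (i,j) = 0 \<or> M $$ (i,j) = 1"
      unfolding zero_one_mat_def by auto
    let ?S = "{(a,b). a<n \<and> b<n \<and> M$$(a,b) = 1}"
    have "M = mat n n (\<lambda>ij. if ij \<in> ?S then 1 else 0)"
      by (rule eq_matI, insert M, auto)
    thus "M \<in> (\<lambda>S. mat n n (\<lambda>ij. if ij \<in> S then 1 else 0)) ` Pow ({..<n}\<times>{..<n})" by blast
  qed
  hence "finite {M. zero_one_mat n M}" by (rule finite_subset) auto
  hence "finite (det ` {M. zero_one_mat n M})" by auto
  moreover have "{det M | M. zero_one_mat n M} = det ` {M. zero_one_mat n M}" by auto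
  ultimately show ?thesis by simp
qed

lemma det_le_h: "zero_one_mat n X \<Longrightarrow> det X \<le> h n"
  unfolding h_def by (rule Max_ge[OF zo_finite]) auto

lemma abs_det_le_h: assumes X: "zero_one_mat n X" shows "\<bar>det X\<bar> \<le> h n"
proof (cases "det X \<ge> 0")
  case True thus ?thesis using det_le_h[OF X] by simp
next
  case False
  have Xc: "X \<in> carrier_mat n n" and X01: "\<forall>i<n. \<forall>j<n. X $$ (i,j) = 0 \<or> X $$ (i,j) = 1"
    using X unfolding zero_one_mat_def by auto
  show ?thesis
  proof (cases "n \<ge> 2")
    case True
    let ?Y = "swaprows 0 1 X"
    have "det ?Y = - det X" using det_swaprows[OF _ _ _ Xc, of 0 1] True by auto
    moreover have "zero_one_mat n ?Y" unfolding zero_one_mat_def using Xc X01 True by auto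
    ultimately show ?thesis using det_le_h[of n ?Y] False by simp
  next
    case nt: False
    have "upper_triangular X" unfolding upper_triangular_def using Xc nt by auto
    hence "det X = prod_list (diag_mat X)" using det_upper_triangular Xc by blast
    also have "\<dots> \<ge> 0" unfolding diag_mat_def using Xc X01
      by (intro prod_list_nonneg) (force)
    finally show ?thesis using False by simp
  qed
qed

lemma border_det: assumes "X \<in> carrier_mat n n" shows "det (border_mat n X) = det X"
proof -
  have "border_mat n X = four_block_mat X (mat n 1 (\<lambda>_. 1)) (0\<^sub>m 1 n) (1\<^sub>m 1)"
    by (rule eq_matI, insert assms, auto simp: border_mat_def four_block_mat_def)
  thus ?thesis using det_four_block_mat_lower_left_zero[OF assms, of "mat n 1 (\<lambda>_. 1)" 1 "0\<^sub>m 1 n" "1\<^sub>m 1"]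
    by auto
qed


lemma cramer_part:
  fixes M L :: "real mat"
  assumes M: "zero_one_mat n M" and L: "L \<in> carrier_mat (n+1) (n+1)"
    and inv: "inverts_mat (border_mat n M) L" and i: "i < n"
    and f: "\<forall>a<n. f a = 0 \<or> f a = 1"
  shows "\<bar>(\<Sum>j<n. L $$ (i,j) * f j) * det M\<bar> \<le> h n"
proof -
  let ?A = "border_mat n M"
  have Mc: "M \<in> carrier_mat n n" and M01: "\<forall>i<n. \<forall>j<n. M $$ (i,j) = 0 \<or> M $$ (i,j) = 1"
    using M unfolding zero_one_mat_def by auto
  have Ac: "?A \<in> carrier_mat (n+1) (n+1)" unfolding border_mat_def by auto
  define c where "c = vec (n+1) (\<lambda>j. if j < n then f j else 0)"
  have cc: "c \<in> carrier_vec (n+1)" unfolding c_def by auto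
  have AL: "?A * L = 1\<^sub>m (n+1)" using inv Ac unfolding inverts_mat_def by auto
  have "?A *\<^sub>v (L *\<^sub>v c) = (?A * L) *\<^sub>v c"
    using assoc_mult_mat_vec[OF Ac L cc] by simp
  also have "\<dots> = c" using AL cc by auto
  finally have eq: "?A *\<^sub>v (L *\<^sub>v c) = c" .
  have Lc: "L *\<^sub>v c \<in> carrier_vec (n+1)" using L cc by auto
  have in1: "i < n+1" using i by auto
  have cr: "det (replace_col ?A c i) = (L *\<^sub>v c) $ i * det ?A"
    using cramer_lemma_mat[OF Ac Lc in1] eq by simp
  define M' where "M' = mat n n (\<lambda>(a,b). if b = i then f a else M$$(a,b))"
  have M'c: "M' \<in> carrier_mat n n" unfolding M'_def by auto
  have rc: "replace_col ?A c i = border_mat n M'"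
    by (rule eq_matI, insert i Mc, auto simp: replace_col_def border_mat_def M'_def c_def)
  have Lci: "(L *\<^sub>v c) $ i = (\<Sum>j<n. L $$ (i,j) * f j)"
  proof -
    have "(L *\<^sub>v c) $ i = (\<Sum>j\<in>{0..<n+1}. L $$ (i,j) * c $ j)"
      using L in1 cc by (simp add: scalar_prod_def)
    also have "\<dots> = (\<Sum>j<n+1. L $$ (i,j) * (if j < n then f j else 0))"
      unfolding c_def by (intro sum.cong) auto
    also have "\<dots> = (\<Sum>j<n. L $$ (i,j) * f j)" by simp
    finally show ?thesis .
  qed
  have "det M' = (\<Sum>j<n. L $$ (i,j) * f j) * det M"
    using cr rc Lci border_det[OF M'c] border_det[OF Mc] by simp
  moreover have "zero_one_mat n M'" unfolding zero_one_mat_def M'_def using f M01 by auto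
  ultimately show ?thesis using abs_det_le_h by metis
qed


lemma row_facts:
  fixes M L :: "real mat"
  assumes M: "zero_one_mat n M" and L: "L \<in> carrier_mat (n+1) (n+1)"
    and inv: "inverts_mat L (border_mat n M)" and i: "i < n"
  shows "(\<Sum>j<n. L $$ (i,j)) + L $$ (i,n) = 0" "(\<Sum>j<n. L $$ (i,j) * M $$ (j,i)) = 1"
proof -
  let ?A = "border_mat n M"
  have Ac: "?A \<in> carrier_mat (n+1) (n+1)" unfolding border_mat_def by auto
  have LA: "L * ?A = 1\<^sub>m (n+1)" using inv L unfolding inverts_mat_def by auto
  have e: "\<And>k. k < n+1 \<Longrightarrow> (L * ?A) $$ (i,k) = (\<Sum>j<n+1. L $$ (i,j) * ?A $$ (j,k))"
    using L Ac i by (simp add: scalar_prod_def lessThan_atLeast0)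
  have "(\<Sum>j<n+1. L $$ (i,j) * ?A $$ (j,n)) = 0" using e[of n] LA i by simp
  moreover have "(\<Sum>j<n+1. L $$ (i,j) * ?A $$ (j,n)) = (\<Sum>j<n+1. L $$ (i,j))"
    by (intro sum.cong) (auto simp: border_mat_def)
  ultimately show "(\<Sum>j<n. L $$ (i,j)) + L $$ (i,n) = 0" by simp
  have "(\<Sum>j<n+1. L $$ (i,j) * ?A $$ (j,i)) = 1" using e[of i] LA i by simp
  moreover have "(\<Sum>j<n+1. L $$ (i,j) * ?A $$ (j,i)) = (\<Sum>j<n. L $$ (i,j) * M $$ (j,i))"
    using i by (simp add: border_mat_def)
  ultimately show "(\<Sum>j<n. L $$ (i,j) * M $$ (j,i)) = 1" by simp
qed

lemma row_ge2:
  fixes M L :: "real mat"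
  assumes M: "zero_one_mat n M" and L: "L \<in> carrier_mat (n+1) (n+1)"
    and inv: "inverts_mat L (border_mat n M)" and i: "i < n"
  shows "(\<Sum>j<n+1. \<bar>L $$ (i,j)\<bar>) \<ge> 2"
proof -
  have M01: "\<forall>i<n. \<forall>j<n. M $$ (i,j) = 0 \<or> M $$ (i,j) = 1"
    using M unfolding zero_one_mat_def by auto
  note rf = row_facts[OF assms]
  define x where "x j = L $$ (i,j)" for j
  define a where "a j = M $$ (j,i)" for j
  have a01: "\<forall>j<n. a j = 0 \<or> a j = 1" using M01 i unfolding a_def by auto
  have s0: "(\<Sum>j<n. x j) + x n = 0" and s1: "(\<Sum>j<n. x j * a j) = 1"
    using rf unfolding x_def a_def by auto
  have "(\<Sum>j<n. \<bar>x j\<bar>) = (\<Sum>j<n. \<bar>x j * a j\<bar> + \<bar>x j * (1 - a j)\<bar>)"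
    using a01 by (intro sum.cong) auto
  also have "\<dots> = (\<Sum>j<n. \<bar>x j * a j\<bar>) + (\<Sum>j<n. \<bar>x j * (1 - a j)\<bar>)"
    by (simp add: sum.distrib)
  also have "\<dots> \<ge> \<bar>\<Sum>j<n. x j * a j\<bar> + \<bar>\<Sum>j<n. x j * (1 - a j)\<bar>"
    by (intro add_mono sum_abs)
  finally have g: "(\<Sum>j<n. \<bar>x j\<bar>) \<ge> \<bar>\<Sum>j<n. x j * a j\<bar> + \<bar>\<Sum>j<n. x j * (1 - a j)\<bar>" .
  have "(\<Sum>j<n. x j * (1 - a j)) = (\<Sum>j<n. x j) - (\<Sum>j<n. x j * a j)"
    by (simp add: algebra_simps sum_subtractf)
  hence "(\<Sum>j<n. x j * (1 - a j)) = - x n - 1" using s0 s1 by simp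
  hence "(\<Sum>j<n. \<bar>x j\<bar>) \<ge> 1 + \<bar>x n + 1\<bar>" using g s1 by simp
  hence "(\<Sum>j<n+1. \<bar>x j\<bar>) \<ge> 2" by simp
  thus ?thesis unfolding x_def .
qed

lemma row_le2:
  fixes M L :: "real mat"
  assumes M: "zero_one_mat n M" and L: "L \<in> carrier_mat (n+1) (n+1)"
    and inv1: "inverts_mat (border_mat n M) L"
    and inv: "inverts_mat L (border_mat n M)" and i: "i < n"
    and d0: "det M \<noteq> 0" and dh: "\<bar>det M\<bar> = h n"
  shows "(\<Sum>j<n+1. \<bar>L $$ (i,j)\<bar>) \<le> 2"
proof -
  note rf = row_facts[OF M L inv i]
  define x where "x j = L $$ (i,j)" for j
  define fp where "fp j = (if x j > 0 then 1 else 0::real)" for j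
  define fm where "fm j = (if x j < 0 then 1 else 0::real)" for j
  have s0: "(\<Sum>j<n. x j) + x n = 0" using rf unfolding x_def by auto
  have cp: "\<bar>(\<Sum>j<n. x j * fp j) * det M\<bar> \<le> \<bar>det M\<bar>"
    using cramer_part[OF M L inv1 i, of fp] dh unfolding x_def fp_def by auto
  have cm: "\<bar>(\<Sum>j<n. x j * fm j) * det M\<bar> \<le> \<bar>det M\<bar>"
    using cramer_part[OF M L inv1 i, of fm] dh unfolding x_def fm_def by auto
  define P where "P = (\<Sum>j<n. x j * fp j)"
  define N where "N = (\<Sum>j<n. x j * fm j)"
  have P1: "\<bar>P\<bar> \<le> 1" using cp d0 unfolding P_def by (simp add: abs_mult)
  have N1: "\<bar>N\<bar> \<le> 1" using cm d0 unfolding N_def by (simp add: abs_mult)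
  have P0: "P \<ge> 0" unfolding P_def fp_def by (intro sum_nonneg) auto
  have N0: "N \<le> 0" unfolding N_def fm_def by (intro sum_nonpos) (auto simp: mult_le_0_iff)
  have "(\<Sum>j<n. \<bar>x j\<bar>) = (\<Sum>j<n. x j * fp j - x j * fm j)"
    unfolding fp_def fm_def by (intro sum.cong) auto
  hence ab: "(\<Sum>j<n. \<bar>x j\<bar>) = P - N" unfolding P_def N_def by (simp add: sum_subtractf)
  have "(\<Sum>j<n. x j) = (\<Sum>j<n. x j * fp j + x j * fm j)"
    unfolding fp_def fm_def by (intro sum.cong) auto
  hence sm: "(\<Sum>j<n. x j) = P + N" unfolding P_def N_def by (simp add: sum.distrib)
  have "(\<Sum>j<n+1. \<bar>x j\<bar>) = P - N + \<bar>P + N\<bar>" using ab sm s0 by simp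
  also have "\<dots> \<le> 2" using P1 N1 P0 N0 by (auto simp: abs_if split: if_splits)
  finally show ?thesis unfolding x_def .
qed

theorem theorem9p1:
  fixes n :: nat and M L :: "real mat"
  assumes "zero_one_mat n M"
    and "det M \<noteq> 0"
    and "L \<in> carrier_mat (n+1) (n+1)"
    and "inverts_mat (border_mat n M) L" and "inverts_mat L (border_mat n M)"
  shows "(\<forall>i<n. (\<Sum>j<n+1. \<bar>L $$ (i,j)\<bar>) \<ge> 2)
    \<and> (\<bar>det M\<bar> = h n \<longrightarrow> (\<forall>i<n. (\<Sum>j<n+1. \<bar>L $$ (i,j)\<bar>) = 2))
    \<and> ((\<exists>i<n. (\<Sum>j<n+1. \<bar>L $$ (i,j)\<bar>) > 2) \<longrightarrow> \<bar>det M\<bar> < h n)"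
proof -
  have A: "\<forall>i<n. (\<Sum>j<n+1. \<bar>L $$ (i,j)\<bar>) \<ge> 2"
    using row_ge2[OF assms(1,3,5)] by blast
  have B: "\<bar>det M\<bar> = h n \<longrightarrow> (\<forall>i<n. (\<Sum>j<n+1. \<bar>L $$ (i,j)\<bar>) = 2)"
    using A row_le2[OF assms(1,3,4,5) _ assms(2)] by (meson antisym)
  have C: "(\<exists>i<n. (\<Sum>j<n+1. \<bar>L $$ (i,j)\<bar>) > 2) \<longrightarrow> \<bar>det M\<bar> < h n"
    using B abs_det_le_h[OF assms(1)] by force
  show ?thesis using A B C by blast
qed

end
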